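(* Let $A$ be a Banach lattice algebra with identity $e$. The set $OI(A)$ is a Boolean algebra, with minimum $0$, maximum $e$ and operations \[\overline p=e-p,\qquad p\vee q=p+q-pq,\qquad p\wedge q=pq\qquad(p,q\in OI(A)),\] and these suprema and infima coincide with the suprema and infima of $p,q$ computed in the lattice $A$.
   Context: A Banach lattice algebra is a real Banach lattice $A$ with an associative bilinear product making it a Banach algebra such that $xy\ge0$ whenever $x,y\ge0$; identity $e$ means a multiplicative identity with $\|e\|=1$. $OI(A)=\{p\in A: p^2=p,\ 0\le p\le e\}$. *)

theory Defs
  imports "HOL-Analysis.Analysis"
begin

definition lmod :: "'a::{lattice, uminus} \<Rightarrow> 'a" where
  "lmod x = sup x (- x)"

text \<open>The type class
  real_normed_algebra_1 + banach provides: a real Banach space with an associative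
  bilinear product, submultiplicative norm (Banach algebra) and a multiplicative
  identity 1 with norm 1 = 1.  The predicate below adds: the order is a lattice order
  compatible with the vector space structure (Riesz space), the norm is a lattice
  norm (Banach lattice), and products of positive elements are positive.\<close>
definition banach_lattice_algebra :: "'a::{real_normed_algebra_1, banach, lattice} itself \<Rightarrow> bool" where
  "banach_lattice_algebra _ \<longleftrightarrow>
     (\<forall>x y z :: 'a. x \<le> y \<longrightarrow> x + z \<le> y + z) \<and>
     (\<forall>(x :: 'a) y (c :: real). x \<le> y \<longrightarrow> 0 \<le> c \<longrightarrow> c *\<^sub>R x \<le> c *\<^sub>R y) \<and>
     (\<forall>x y :: 'a. lmod x \<le> lmod y \<longrightarrow> norm x \<le> norm y) \<and>
     (\<forall>x y :: 'a. 0 \<le> x \<longrightarrow> 0 \<le> y \<longrightarrow> 0 \<le> x * y)"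

definition OI :: "'a::{real_normed_algebra_1, lattice} set" where
  "OI = {p. p * p = p \<and> 0 \<le> p \<and> p \<le> 1}"

text \<open>A Boolean algebra on a carrier set S: the axioms of Isabelle's locale
  boolean_algebra (Boolean_Algebras.thy), relativised to S, plus closure of S
  under the operations.\<close>
definition boolean_algebra_on ::
  "'a set \<Rightarrow> ('a \<Rightarrow> 'a \<Rightarrow> 'a) \<Rightarrow> ('a \<Rightarrow> 'a \<Rightarrow> 'a) \<Rightarrow> ('a \<Rightarrow> 'a) \<Rightarrow> 'a \<Rightarrow> 'a \<Rightarrow> bool" where
  "boolean_algebra_on S cj dj cp zero one \<longleftrightarrow>
     zero \<in> S \<and> one \<in> S \<and>
     (\<forall>x\<in>S. cp x \<in> S) \<and>
     (\<forall>x\<in>S. \<forall>y\<in>S. cj x y \<in> S \<and> dj x y \<in> S) \<and>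
     (\<forall>x\<in>S. \<forall>y\<in>S. \<forall>z\<in>S. cj (cj x y) z = cj x (cj y z)) \<and>
     (\<forall>x\<in>S. \<forall>y\<in>S. cj x y = cj y x) \<and>
     (\<forall>x\<in>S. \<forall>y\<in>S. \<forall>z\<in>S. dj (dj x y) z = dj x (dj y z)) \<and>
     (\<forall>x\<in>S. \<forall>y\<in>S. dj x y = dj y x) \<and>
     (\<forall>x\<in>S. \<forall>y\<in>S. \<forall>z\<in>S. cj x (dj y z) = dj (cj x y) (cj x z)) \<and>
     (\<forall>x\<in>S. \<forall>y\<in>S. \<forall>z\<in>S. dj x (cj y z) = cj (dj x y) (dj x z)) \<and>
     (\<forall>x\<in>S. cj x one = x) \<and>
     (\<forall>x\<in>S. dj x zero = x) \<and>
     (\<forall>x\<in>S. cj x (cp x) = zero) \<and>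
     (\<forall>x\<in>S. dj x (cp x) = one)"

end

theory Submission
  imports Defs
begin
locale bla =
  fixes A :: "'a::{real_normed_algebra_1, banach, lattice} itself"
  assumes tr: "\<And>x y z :: 'a. x \<le> y \<Longrightarrow> x + z \<le> y + z"
    and sc: "\<And>(x :: 'a) y (c :: real). x \<le> y \<Longrightarrow> 0 \<le> c \<Longrightarrow> c *\<^sub>R x \<le> c *\<^sub>R y"
    and nm: "\<And>x y :: 'a. lmod x \<le> lmod y \<Longrightarrow> norm x \<le> norm y"
    and pos: "\<And>x y :: 'a. 0 \<le> x \<Longrightarrow> 0 \<le> y \<Longrightarrow> 0 \<le> x * y"
begin

lemma le_diff: "(x::'a) \<le> y \<longleftrightarrow> 0 \<le> y - x"
  using tr[of x y "-x"] tr[of 0 "y-x" x] by auto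

lemma tr_iff: "(x::'a) \<le> y \<longleftrightarrow> x + z \<le> y + z"
  using tr[of x y z] tr[of "x+z" "y+z" "-z"] by auto

lemma ml: "0 \<le> (z::'a) \<Longrightarrow> x \<le> y \<Longrightarrow> x * z \<le> y * z"
  using le_diff[of x y] le_diff[of "x*z" "y*z"] pos[of "y-x" z] by (simp add: left_diff_distrib)
lemma mr: "0 \<le> (z::'a) \<Longrightarrow> x \<le> y \<Longrightarrow> z * x \<le> z * y"
  using le_diff[of x y] le_diff[of "z*x" "z*y"] pos[of z "y-x"] by (simp add: right_diff_distrib)

lemma le_add: "(x::'a) \<le> y \<Longrightarrow> 0 \<le> z \<Longrightarrow> x \<le> y + z"
  using tr[of 0 z y] by (simp add: add.commute)

lemma nat_nonneg: "0 \<le> (x::'a) \<Longrightarrow> 0 \<le> of_nat n * x"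
  using sc[of 0 x "real n"] by (simp add: scaleR_conv_of_real)

lemma lmod_pos: "0 \<le> (x::'a) \<Longrightarrow> lmod x = x"
proof -
  assume x: "0 \<le> x"
  have "-x \<le> 0" using tr_iff[of "-x" 0 x] x by simp
  hence "-x \<le> x" using x by (rule order_trans)
  thus ?thesis unfolding lmod_def by (rule sup_absorb1)
qed

lemma norm_mono: "0 \<le> (x::'a) \<Longrightarrow> x \<le> y \<Longrightarrow> norm x \<le> norm y"
  using nm[of x y] lmod_pos[of x] lmod_pos[of y] by auto

lemma one_pos: "0 \<le> (1::'a)"
proof -
  define a :: 'a where "a = sup 1 0"
  define b :: 'a where "b = a - 1"
  have a0: "0 \<le> a" and b0: "0 \<le> b" using le_diff[of 1 a] by (auto simp: a_def b_def)
  define s :: 'a where "s = sup 1 (-1)"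
  have "0 \<le> s + s"
  proof -
    have "1 + (-1) \<le> s + (-1)" using tr[of 1 s "-1"] by (simp add: s_def)
    also have "\<dots> \<le> s + s" using tr[of "-1" s s] by (simp add: s_def add.commute)
    finally show ?thesis by simp
  qed
  from sc[OF this, of "1/2"] have "(1/2::real) *\<^sub>R 0 \<le> (1/2::real) *\<^sub>R (s + s)" by simp
  moreover have "(1/2::real) *\<^sub>R (s + s) = s" by (simp flip: scaleR_2)
  ultimately have s0: "0 \<le> s" by simp
  have "a \<le> s" unfolding a_def using s0 by (simp add: s_def)
  hence "lmod a \<le> lmod 1" using lmod_pos[OF a0] by (simp add: lmod_def s_def)
  hence "norm a \<le> norm (1::'a)" by (rule nm)
  hence na: "norm a \<le> 1" by simp
  have e: "1 = a - b" by (simp add: b_def)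
  have ab: "a * b = b + b * b"
  proof -
    have "a * b - b * b = (a - b) * b" by (simp add: left_diff_distrib)
    hence "a * b - b * b = b" using e by simp
    thus ?thesis by (simp add: algebra_simps)
  qed
  have aa: "a * a = a + b + b * b"
  proof -
    have "b * a = b + b * b"
    proof -
      have "b * a - b * b = b * (a - b)" by (simp add: right_diff_distrib)
      hence "b * a - b * b = b" using e by simp
      thus ?thesis by (simp add: algebra_simps)
    qed
    moreover have "a * a - b * a = (a - b) * a" by (simp add: left_diff_distrib)
    hence "a = a * a - b * a" using e by simp
    ultimately show ?thesis by (simp add: algebra_simps)
  qed
  have bb: "0 \<le> b * b" using pos b0 by blast
  have ind: "a + of_nat n * b \<le> a ^ Suc n" for n
  proof (induction n)
    case 0 then show ?case by simp
  next
    case (Suc n)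
    have i1: "a * (a + of_nat n * b) \<le> a * a ^ Suc n" using mr[OF a0 Suc] .
    have i2: "a * (a + of_nat n * b) = (a + of_nat (Suc n) * b) + (b * b + of_nat n * (b * b))"
    proof -
      have "a * (of_nat n * b) = of_nat n * (b + b * b)"
        by (metis ab mult.assoc mult_of_nat_commute)
      thus ?thesis using aa by (simp add: algebra_simps)
    qed
    have i3: "0 \<le> b * b + of_nat n * (b * b)"
      using le_add[OF bb nat_nonneg[OF bb]] by simp
    have "a + of_nat (Suc n) * b \<le> (a + of_nat (Suc n) * b) + (b * b + of_nat n * (b * b))"
      by (rule le_add[OF order_refl i3])
    also have "\<dots> = a * (a + of_nat n * b)" by (rule i2[symmetric])
    also have "\<dots> \<le> a * a ^ Suc n" by (rule i1)
    finally show ?case by simp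
  qed
  have bn: "real n * norm b \<le> 1" for n
  proof -
    have nb0: "0 \<le> of_nat n * b" using nat_nonneg[OF b0] .
    have "of_nat n * b \<le> a + of_nat n * b" using le_add[OF order_refl a0, of "of_nat n * b"] by (simp add: add.commute)
    hence "of_nat n * b \<le> a ^ Suc n" using ind[of n] by (rule order_trans)
    hence "norm (of_nat n * b) \<le> norm (a ^ Suc n)" using norm_mono[OF nb0] by simp
    also have "\<dots> \<le> norm a ^ Suc n" by (rule norm_power_ineq)
    also have "\<dots> \<le> 1" using na by (intro power_le_one) auto
    finally have "norm (of_nat n * b) \<le> 1" .
    moreover have "of_nat n * b = real n *\<^sub>R b" by (simp add: scaleR_conv_of_real)
    ultimately show ?thesis by simp
  qed
  have "norm b = 0"
  proof (rule ccontr)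
    assume "norm b \<noteq> 0"
    hence p: "norm b > 0" by simp
    obtain n :: nat where "real n > 1 / norm b" using reals_Archimedean2 by blast
    hence "real n * norm b > 1" using p by (simp add: field_simps)
    thus False using bn[of n] by simp
  qed
  hence "b = 0" by simp
  thus ?thesis using a0 e by simp
qed
lemma supinf: "sup (p::'a) q = p + q - inf p q"
proof (rule antisym)
  have "p \<le> p + q - inf p q" using tr_iff[of "inf p q" q "p - inf p q"] by (simp add: algebra_simps)
  moreover have "q \<le> p + q - inf p q" using tr_iff[of "inf p q" p "q - inf p q"] by (simp add: algebra_simps)
  ultimately show "sup p q \<le> p + q - inf p q" by simp
next
  have "p + q - sup p q \<le> p" using tr_iff[of q "sup p q" "p - sup p q"] by (simp add: algebra_simps)
  moreover have "p + q - sup p q \<le> q" using tr_iff[of p "sup p q" "q - sup p q"] by (simp add: algebra_simps)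
  ultimately have "p + q - sup p q \<le> inf p q" by simp
  then show "p + q - inf p q \<le> sup p q"
    using tr_iff[of "p + q - sup p q" "inf p q" "sup p q - inf p q"] by (simp add: algebra_simps)
qed

lemma absorb:
  assumes p: "p \<in> OI" and x: "0 \<le> x" "x \<le> (p::'a)"
  shows "x * p = x" "p * x = x"
proof -
  have pp: "p * p = p" "0 \<le> p" "p \<le> 1" using p by (auto simp: OI_def)
  have c: "0 \<le> 1 - p" using pp le_diff by blast
  have "x * (1 - p) \<le> p * (1 - p)" using ml[OF c x(2)] .
  moreover have "p * (1 - p) = 0" using pp by (simp add: right_diff_distrib)
  moreover have "0 \<le> x * (1 - p)" using pos x c by blast
  ultimately show "x * p = x" by (simp add: right_diff_distrib)
  have "(1 - p) * x \<le> (1 - p) * p" using mr[OF c x(2)] .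
  moreover have "(1 - p) * p = 0" using pp by (simp add: left_diff_distrib)
  moreover have "0 \<le> (1 - p) * x" using pos x c by blast
  ultimately show "p * x = x" by (simp add: left_diff_distrib)
qed

lemma prod_inf:
  assumes p: "p \<in> OI" and q: "q \<in> OI"
  shows "p * q = inf p (q::'a)"
proof -
  have P: "p * p = p" "0 \<le> p" "p \<le> 1" and Q: "q * q = q" "0 \<le> q" "q \<le> 1" using p q by (auto simp: OI_def)
  let ?r = "inf p q"
  have r0: "0 \<le> ?r" using P Q by simp
  have "p * q \<le> 1 * q" using ml[OF Q(2) P(3)] .
  hence a: "p * q \<le> q" by simp
  have "p * q \<le> p * 1" using mr[OF P(2) Q(3)] .
  hence b: "p * q \<le> p" by simp
  have "?r = ?r * q" using absorb(1)[OF q r0] by simp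
  also have "\<dots> \<le> p * q" using ml[OF Q(2)] by simp
  finally show ?thesis using a b by (simp add: antisym)
qed

lemma comm: "p \<in> OI \<Longrightarrow> q \<in> OI \<Longrightarrow> p * q = q * (p::'a)"
  using prod_inf by (metis inf_commute)

lemma OI_D: "p \<in> OI \<Longrightarrow> p * p = p \<and> 0 \<le> p \<and> p \<le> (1::'a)" by (simp add: OI_def)

lemma cp_OI: "p \<in> OI \<Longrightarrow> 1 - p \<in> (OI::'a set)"
proof -
  assume "p \<in> OI"
  hence P: "p * p = p" "0 \<le> p" "p \<le> 1" by (auto simp: OI_def)
  have "0 \<le> 1 - p" using P(3) le_diff by blast
  moreover have "1 - p \<le> 1" using tr_iff[of "1 - p" 1 p] tr_iff[of 0 p 1] P(2) by (simp add: add.commute)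
  moreover have "(1 - p) * (1 - p) = 1 - p" using P(1) by (simp add: algebra_simps)
  ultimately show ?thesis by (simp add: OI_def)
qed

lemma cj_OI: assumes "p \<in> OI" "q \<in> OI" shows "p * q \<in> (OI::'a set)"
proof -
  have P: "p * p = p" "0 \<le> p" "p \<le> 1" and Q: "q * q = q" "0 \<le> q" "q \<le> 1" using assms by (auto simp: OI_def)
  have "p * q * (p * q) = p * (q * p) * q" by (simp add: mult.assoc)
  also have "\<dots> = p * (p * q) * q" using comm[OF assms] by simp
  also have "\<dots> = (p * p) * (q * q)" by (simp add: mult.assoc)
  finally have "p * q * (p * q) = p * q" using P Q by simp
  moreover have "0 \<le> p * q" using pos P Q by blast
  moreover have "p * q \<le> 1" using prod_inf[OF assms] P(3) by (simp add: le_infI1)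
  ultimately show ?thesis by (simp add: OI_def)
qed

lemma dj_eq: "p + q - p * q = 1 - (1 - p) * (1 - (q::'a))"
  by (simp add: algebra_simps)

lemma dj_OI: "p \<in> OI \<Longrightarrow> q \<in> OI \<Longrightarrow> p + q - p * q \<in> (OI::'a set)"
  unfolding dj_eq by (intro cp_OI cj_OI) auto

lemma d1: assumes "x \<in> OI" "y \<in> OI" "z \<in> OI"
  shows "x * (y + z - y * z) = x * y + x * z - x * y * (x * (z::'a))"
proof -
  have "x * y * (x * z) = x * (y * x) * z" by (simp add: mult.assoc)
  also have "\<dots> = x * (x * y) * z" using comm[OF assms(1,2)] by simp
  also have "\<dots> = (x * x) * y * z" by (simp add: mult.assoc)
  also have "\<dots> = x * y * z" using OI_D[OF assms(1)] by simp
  finally show ?thesis by (simp add: algebra_simps)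
qed

lemma d2: assumes "x \<in> OI" "y \<in> OI" "z \<in> OI"
  shows "x + y * z - x * (y * z) = (x + y - x * y) * (x + z - x * (z::'a))"
proof -
  have xx: "x * x = x" using OI_D[OF assms(1)] by simp
  have yx: "y * x = x * y" using comm[OF assms(1,2)] by simp
  have e1: "x * (x + z - x * z) = x"
  proof -
    have "x * (x + z - x * z) = x * x + x * z - (x * x) * z" by (simp add: algebra_simps)
    thus ?thesis using xx by simp
  qed
  have e2: "y * (x + z - x * z) = x * y + y * z - x * y * z"
  proof -
    have "y * (x + z - x * z) = y * x + y * z - (y * x) * z" by (simp add: algebra_simps)
    thus ?thesis using yx by simp
  qed
  have e3: "(x * y) * (x + z - x * z) = x * y"
  proof -
    have xyx: "x * y * x = x * y" using xx yx by (metis mult.assoc)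
    have "(x * y) * (x + z - x * z) = (x * y * x) + x * y * z - (x * y * x) * z" by (simp add: algebra_simps)
    thus ?thesis using xyx by simp
  qed
  have "(x + y - x * y) * (x + z - x * z) = x * (x + z - x * z) + y * (x + z - x * z) - (x * y) * (x + z - x * z)"
    by (simp add: algebra_simps)
  also have "\<dots> = x + y * z - x * (y * z)" unfolding e1 e2 e3 by (simp add: algebra_simps)
  finally show ?thesis by simp
qed

lemma a2: "x + y - x * y + z - (x + y - x * y) * z = x + (y + z - y * z) - x * (y + z - y * (z::'a))"
  by (simp add: algebra_simps)

lemma cpl: assumes "x \<in> OI" shows "x * (1 - x) = 0" "x + (1 - x) - x * (1 - x) = (1::'a)"
  using OI_D[OF assms] by (auto simp: algebra_simps)

end

theorem mainTheorem6:
  fixes A :: "'a::{real_normed_algebra_1, banach, lattice} itself"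
  assumes "banach_lattice_algebra A"
  shows "boolean_algebra_on (OI :: 'a set) (\<lambda>p q. p * q) (\<lambda>p q. p + q - p * q) (\<lambda>p. 1 - p) 0 1
    \<and> (\<forall>p\<in>(OI :: 'a set). 0 \<le> p \<and> p \<le> 1)
    \<and> (\<forall>p\<in>(OI :: 'a set). \<forall>q\<in>OI. p + q - p * q = sup p q \<and> p * q = inf p q)"
proof -
  interpret bla A using assms unfolding banach_lattice_algebra_def by unfold_locales blast+
  have j: "\<forall>p\<in>(OI :: 'a set). \<forall>q\<in>OI. p + q - p * q = sup p q \<and> p * q = inf p q"
    using prod_inf supinf by simp
  have o1: "(0::'a) \<in> OI" "(1::'a) \<in> OI" using one_pos by (auto simp: OI_def)
  have b: "boolean_algebra_on (OI :: 'a set) (\<lambda>p q. p * q) (\<lambda>p q. p + q - p * q) (\<lambda>p. 1 - p) 0 1"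
    unfolding boolean_algebra_on_def
  proof (intro conjI ballI)
    fix x y z :: 'a assume x: "x \<in> OI" and y: "y \<in> OI" and z: "z \<in> OI"
    show "x * y * z = x * (y * z)" by (simp add: mult.assoc)
    show "x * y = y * x" using comm[OF x y] .
    show "x + y - x * y + z - (x + y - x * y) * z = x + (y + z - y * z) - x * (y + z - y * z)" by (rule a2)
    show "x + y - x * y = y + x - y * x" using comm[OF x y] by (simp add: add.commute)
    show "x * (y + z - y * z) = x * y + x * z - x * y * (x * z)" by (rule d1[OF x y z])
    show "x + y * z - x * (y * z) = (x + y - x * y) * (x + z - x * z)" by (rule d2[OF x y z])
  next
    fix x y :: 'a assume x: "x \<in> OI" and y: "y \<in> OI"
    show "x * y \<in> OI" by (rule cj_OI[OF x y])
    show "x + y - x * y \<in> OI" by (rule dj_OI[OF x y])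
  next
    fix x :: 'a assume x: "x \<in> OI"
    show "1 - x \<in> OI" by (rule cp_OI[OF x])
    show "x * 1 = x" by simp
    show "x + 0 - x * 0 = x" by simp
    show "x * (1 - x) = 0" by (rule cpl(1)[OF x])
    show "x + (1 - x) - x * (1 - x) = 1" by (rule cpl(2)[OF x])
  qed (rule o1)+
  have c: "\<forall>p\<in>(OI :: 'a set). 0 \<le> p \<and> p \<le> 1" using OI_D by blast
  show ?thesis using b c j by (intro conjI)
qed

end
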